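(* Let $u$ be a nonempty word, let $s$ be a nonempty prefix of $u$, and let $j$ be the length of the longest prefix of $u$ covered by $s$. Then $s$ is a left seed of $u$ if and only if $j\ge \mathrm{per}(u)$. In particular, if $s$ is the shortest left seed of $u$, then $s$ is the shortest cover of the prefix $u[1..j]$.
   Context: Positions in a word $u$ are numbered $1,\dots,|u|$; $u[i..j]=u_i\cdots u_j$. For a nonempty word $x$, $\mathrm{per}(x)$ is the smallest positive integer $p$ with $x_i=x_{i+p}$ for all $1\le i\le|x|-p$. A word $s$ covers a word $w$ (is a cover of $w$) if every position of $w$ lies inside some occurrence of $s$ as a factor of $w$. A word $s$ is a seed of $u$ if $s$ is a factor of $u$ and $u$ is a factor of some word covered by $s$; $s$ is a left seed of $u$ if $s$ is both a prefix of $u$ and a seed of $u$. *)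

theory Defs
  imports Main "HOL-Library.Sublist"
begin

text \<open>Words are lists. Positions are 0-based here (paper: 1-based).\<close>

definition factor :: "'a list \<Rightarrow> 'a list \<Rightarrow> bool" where
  "factor x w \<longleftrightarrow> (\<exists>p q. w = p @ x @ q)"

definition occurs_at :: "'a list \<Rightarrow> 'a list \<Rightarrow> nat \<Rightarrow> bool" where
  "occurs_at x w i \<longleftrightarrow> i + length x \<le> length w \<and> take (length x) (drop i w) = x"

definition covers :: "'a list \<Rightarrow> 'a list \<Rightarrow> bool" where
  "covers s w \<longleftrightarrow> (\<forall>k < length w. \<exists>i. occurs_at s w i \<and> i \<le> k \<and> k < i + length s)"

definition per :: "'a list \<Rightarrow> nat" where
  "per x = (LEAST p. 0 < p \<and> (\<forall>i. i + p < length x \<longrightarrow> x ! i = x ! (i + p)))"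

definition seed :: "'a list \<Rightarrow> 'a list \<Rightarrow> bool" where
  "seed s u \<longleftrightarrow> factor s u \<and> (\<exists>w. covers s w \<and> factor u w)"

definition left_seed :: "'a list \<Rightarrow> 'a list \<Rightarrow> bool" where
  "left_seed s u \<longleftrightarrow> prefix s u \<and> seed s u"

definition longest_covered_prefix :: "'a list \<Rightarrow> 'a list \<Rightarrow> nat" where
  "longest_covered_prefix s u = (GREATEST j. j \<le> length u \<and> covers s (take j u))"

end

theory Submission
  imports Defs
begin

lemma occ_nth: "occurs_at x w i \<longleftrightarrow> i + length x \<le> length w \<and> (\<forall>t<length x. w!(i+t) = x!t)"
proof
  assume a: "occurs_at x w i"
  then have l: "i + length x \<le> length w" and e: "take (length x) (drop i w) = x"
    unfolding occurs_at_def by auto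
  show "i + length x \<le> length w \<and> (\<forall>t<length x. w!(i+t) = x!t)"
  proof (intro conjI allI impI l)
    fix t assume "t < length x"
    then have "take (length x) (drop i w) ! t = w!(i+t)" using l by simp
    then show "w!(i+t) = x!t" using e by simp
  qed
next
  assume a: "i + length x \<le> length w \<and> (\<forall>t<length x. w!(i+t) = x!t)"
  then show "occurs_at x w i" unfolding occurs_at_def
    by (auto intro!: nth_equalityI)
qed

lemma per_props:
  assumes "u \<noteq> []"
  shows "0 < per u" "per u \<le> length u" "\<forall>i. i + per u < length u \<longrightarrow> u ! i = u ! (i + per u)"
proof -
  define Q where "Q = (\<lambda>p. 0 < p \<and> (\<forall>i. i + p < length u \<longrightarrow> u ! i = u ! (i + p)))"
  have P: "Q (length u)" unfolding Q_def using assms by simp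
  have pd: "per u = Least Q" unfolding per_def Q_def by simp
  have "Q (Least Q)" by (rule LeastI[of Q, OF P])
  then show "0 < per u" "\<forall>i. i + per u < length u \<longrightarrow> u ! i = u ! (i + per u)"
    unfolding pd Q_def by blast+
  show "per u \<le> length u" unfolding pd by (rule Least_le[of Q, OF P])
qed

lemma per_le:
  assumes "0 < q" "\<forall>i. i + q < length u \<longrightarrow> u ! i = u ! (i + q)"
  shows "per u \<le> q"
  unfolding per_def using assms by (intro Least_le) auto

lemma period_mult:
  assumes "\<forall>i. i + p < length u \<longrightarrow> u ! i = u ! (i + p)"
  shows "i + k*p < length u \<Longrightarrow> u!i = u!(i+k*p)"
proof (induction k)
  case 0 then show ?case by simp
next
  case (Suc k)
  then have "u!i = u!(i+k*p)" by simp
  also have "\<dots> = u!(i+k*p+p)" using assms Suc.prems by simp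
  finally show ?case by (simp add: algebra_simps)
qed

lemma period_mod:
  assumes "\<forall>i. i + p < length u \<longrightarrow> u ! i = u ! (i + p)" "i < length u"
  shows "u!(i mod p) = u!i"
proof -
  have "i = i mod p + (i div p) * p" by simp
  then show ?thesis using period_mult[OF assms(1), of "i mod p" "i div p"] assms(2) by metis
qed

lemma lcp_props:
  shows "longest_covered_prefix s u \<le> length u"
    "covers s (take (longest_covered_prefix s u) u)"
    "j \<le> length u \<Longrightarrow> covers s (take j u) \<Longrightarrow> j \<le> longest_covered_prefix s u"
proof -
  have P0: "0 \<le> length u \<and> covers s (take 0 u)" by (simp add: covers_def)
  have B: "\<And>y. y \<le> length u \<and> covers s (take y u) \<Longrightarrow> y \<le> length u" by simp
  have "longest_covered_prefix s u \<le> length u \<and> covers s (take (longest_covered_prefix s u) u)"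
    unfolding longest_covered_prefix_def by (rule GreatestI_nat[of "\<lambda>j. j \<le> length u \<and> covers s (take j u)" 0 "length u", OF P0 B])
  then show "longest_covered_prefix s u \<le> length u"
    "covers s (take (longest_covered_prefix s u) u)" by auto
  show "j \<le> length u \<Longrightarrow> covers s (take j u) \<Longrightarrow> j \<le> longest_covered_prefix s u"
    unfolding longest_covered_prefix_def by (rule Greatest_le_nat[of "\<lambda>j. j \<le> length u \<and> covers s (take j u)" j "length u", OF _ B]) simp
qed

lemma prefix_nth: "prefix s u \<Longrightarrow> t < length s \<Longrightarrow> u!t = s!t"
  by (auto simp: prefix_def nth_append)

lemma occ_take_mono: "occurs_at x (take n u) i \<Longrightarrow> n \<le> m \<Longrightarrow> occurs_at x (take m u) i"
  by (auto simp: occ_nth)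

lemma lcp_ge_len:
  assumes "prefix s u" shows "length s \<le> longest_covered_prefix s u"
proof (rule lcp_props(3))
  show "length s \<le> length u" using assms prefix_length_le by blast
  show "covers s (take (length s) u)" unfolding covers_def
  proof (intro allI impI)
    fix k assume "k < length (take (length s) u)"
    moreover have "occurs_at s (take (length s) u) 0"
      using assms \<open>length s \<le> length u\<close> by (auto simp: occ_nth prefix_nth)
    ultimately show "\<exists>i. occurs_at s (take (length s) u) i \<and> i \<le> k \<and> k < i + length s" by auto
  qed
qed

lemma covers_take_extend:
  assumes "covers s (take L u)" "L \<le> m" "m \<le> length u" "q \<le> L" "occurs_at s (take m u) q"
    "m = q + length s"
  shows "covers s (take m u)"
  unfolding covers_def
proof (intro allI impI)
  fix k assume k: "k < length (take m u)"
  show "\<exists>i. occurs_at s (take m u) i \<and> i \<le> k \<and> k < i + length s"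
  proof (cases "k < L")
    case True
    then have "k < length (take L u)" using assms by simp
    then obtain i where "occurs_at s (take L u) i" "i \<le> k" "k < i + length s"
      using assms(1) unfolding covers_def by blast
    then show ?thesis using occ_take_mono assms(2) by blast
  next
    case False
    then show ?thesis using assms k by (intro exI[of _ q]) auto
  qed
qed

lemma seed_imp:
  assumes u: "u \<noteq> []" and sne: "s \<noteq> []" and pre: "prefix s u" and ls: "left_seed s u"
  shows "per u \<le> longest_covered_prefix s u"
proof (rule ccontr)
  define L where "L = longest_covered_prefix s u"
  assume "\<not> per u \<le> longest_covered_prefix s u"
  then have Lp: "L < per u" unfolding L_def by simp
  have Lu: "L < length u" using Lp per_props(2)[OF u] by simp
  have Ls: "length s \<le> L" using lcp_ge_len[OF pre] L_def by simp
  have sl: "length s \<le> length u" using pre prefix_length_le by blast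
  obtain w where cw: "covers s w" and fw: "factor u w" using ls unfolding left_seed_def seed_def by blast
  obtain a b where w: "w = a @ u @ b" using fw unfolding factor_def by blast
  have "length a + L < length w" using w Lu by simp
  then obtain i where oi: "occurs_at s w i" and i1: "i \<le> length a + L" and i2: "length a + L < i + length s"
    using cw unfolding covers_def by blast
  have ia: "length a \<le> i" using i2 Ls by simp
  define q where "q = i - length a"
  have wi: "\<And>t. t < length s \<Longrightarrow> w!(i+t) = s!t" using oi by (simp add: occ_nth)
  have iw: "i + length s \<le> length w" using oi by (simp add: occ_nth)
  have wu: "\<And>x. x < length u \<Longrightarrow> w!(length a + x) = u!x" using w by (simp add: nth_append)
  have qL: "q \<le> L" "L < q + length s" using i1 i2 ia q_def by auto
  show False
  proof (cases "q + length s \<le> length u")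
    case True
    have occ: "occurs_at s (take (q + length s) u) q"
      unfolding occ_nth
    proof (intro conjI allI impI)
      show "q + length s \<le> length (take (q + length s) u)" using True by simp
      fix t assume t: "t < length s"
      have "take (q + length s) u ! (q + t) = u!(q+t)" using t by simp
      also have "\<dots> = w!(length a + (q+t))" using wu t True by simp
      also have "\<dots> = w!(i+t)" using ia q_def by (simp add: algebra_simps)
      also have "\<dots> = s!t" using wi t by simp
      finally show "take (q + length s) u ! (q + t) = s!t" .
    qed
    have "covers s (take (q + length s) u)"
      by (rule covers_take_extend[OF lcp_props(2)[of s u, folded L_def] _ True qL(1) occ refl])
        (use qL in simp)
    then have "q + length s \<le> L" using lcp_props(3)[OF True] L_def by simp
    then show False using qL by simp
  next
    case False
    have q0: "0 < q"
    proof (rule ccontr)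
      assume "\<not> 0 < q" then have "q = 0" by simp
      then show False using False sl by simp
    qed
    have "\<forall>x. x + q < length u \<longrightarrow> u ! x = u ! (x + q)"
    proof (intro allI impI)
      fix x assume x: "x + q < length u"
      then have xs: "x < length s" using False by simp
      have "u!(x+q) = w!(length a + (x+q))" using wu x by simp
      also have "\<dots> = w!(i+x)" using ia q_def by (simp add: algebra_simps)
      also have "\<dots> = s!x" using wi xs by simp
      also have "\<dots> = u!x" using prefix_nth[OF pre xs] by simp
      finally show "u ! x = u ! (x + q)" by simp
    qed
    then have "per u \<le> q" using per_le q0 by blast
    then show False using qL Lp by simp
  qed
qed

lemma imp_seed:
  assumes u: "u \<noteq> []" and sne: "s \<noteq> []" and pre: "prefix s u"
    and pj: "per u \<le> longest_covered_prefix s u"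
  shows "left_seed s u"
proof -
  define p where "p = per u"
  define j where "j = longest_covered_prefix s u"
  have p0: "0 < p" and pu: "p \<le> length u" and P: "\<forall>i. i + p < length u \<longrightarrow> u ! i = u ! (i + p)"
    using per_props[OF u] p_def by auto
  have jp: "p \<le> j" using pj p_def j_def by simp
  have ju: "j \<le> length u" using lcp_props(1) j_def by simp
  have cj: "covers s (take j u)" using lcp_props(2) j_def by simp
  define m where "m = length u"
  define N where "N = m * p + j"
  define w where "w = map (\<lambda>i. u!(i mod p)) [0..<N]"
  have lw: "length w = N" by (simp add: w_def)
  have wn: "\<And>x. x < N \<Longrightarrow> w!x = u!(x mod p)" by (simp add: w_def)
  have mN: "m \<le> N" using p0 unfolding N_def by (metis One_nat_def Suc_leI mult_le_mono2 mult.right_neutral le_add1 order_trans)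
  have tw: "take m w = u"
  proof (rule nth_equalityI)
    show "length (take m w) = length u" using lw mN m_def by simp
    fix x assume "x < length (take m w)"
    then have x: "x < m" "x < N" using lw by auto
    then show "take m w ! x = u ! x" using wn period_mod[OF P] m_def by simp
  qed
  have fw: "factor u w" unfolding factor_def
    by (rule exI[of _ "[]"], rule exI[of _ "drop m w"]) (metis append.left_neutral append_take_drop_id tw)
  have cw: "covers s w" unfolding covers_def
  proof (intro allI impI)
    fix k assume k: "k < length w"
    define c where "c = min (k div p) m"
    have cp: "c * p \<le> k" unfolding c_def
      by (metis div_times_less_eq_dividend min.cobounded1 mult.commute order_trans mult_le_mono1)
    have kc: "k - c * p < j"
    proof (cases "k div p \<le> m")
      case True
      then have "c = k div p" using c_def by simp
      then have "k - c*p = k mod p" by (metis minus_div_mult_eq_mod)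
      then show ?thesis using p0 jp by (metis mod_less_divisor order_less_le_trans)
    next
      case False
      then have "c = m" using c_def by simp
      then show ?thesis using k lw N_def jp p0 by simp
    qed
    have cN: "c * p + j \<le> N" unfolding N_def c_def by simp
    have "k - c*p < length (take j u)" using kc ju by simp
    then obtain i where oi: "occurs_at s (take j u) i" and i1: "i \<le> k - c*p" and i2: "k - c*p < i + length s"
      using cj unfolding covers_def by blast
    have ij: "i + length s \<le> j" and ieq: "\<And>t. t < length s \<Longrightarrow> take j u ! (i+t) = s!t"
      using oi ju by (auto simp: occ_nth)
    have "occurs_at s w (i + c*p)" unfolding occ_nth
    proof (intro conjI allI impI)
      show "i + c * p + length s \<le> length w" using ij cN lw by simp
      fix t assume t: "t < length s"
      have "w ! (i + c*p + t) = u!((i + c*p + t) mod p)" using wn ij cN t by simp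
      also have "(i + c*p + t) mod p = (i+t) mod p" proof - have "i + c*p + t = (i+t) + c*p" by simp then show ?thesis by (simp only: mod_mult_self1) qed
      also have "u!((i+t) mod p) = u!(i+t)" using period_mod[OF P] ij ju t by simp
      also have "\<dots> = s!t" using ieq[OF t] ij t by simp
      finally show "w ! (i + c*p + t) = s!t" .
    qed
    then show "\<exists>i. occurs_at s w i \<and> i \<le> k \<and> k < i + length s"
      using i1 i2 cp by (intro exI[of _ "i + c*p"]) auto
  qed
  have "factor s u" using pre unfolding factor_def prefix_def by auto
  then show ?thesis unfolding left_seed_def seed_def using pre cw fw by blast
qed

theorem lemma1:
  fixes u s :: "'a list"
  assumes "u \<noteq> []" and "s \<noteq> []" and "prefix s u"
  shows "(left_seed s u \<longleftrightarrow> longest_covered_prefix s u \<ge> per u)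
    \<and> ((left_seed s u \<and> (\<forall>t. left_seed t u \<longrightarrow> length s \<le> length t)) \<longrightarrow>
        (covers s (take (longest_covered_prefix s u) u)
         \<and> (\<forall>t. covers t (take (longest_covered_prefix s u) u) \<longrightarrow> length s \<le> length t)))"
proof (intro conjI impI allI)
  show iff: "left_seed s u \<longleftrightarrow> longest_covered_prefix s u \<ge> per u"
    using seed_imp imp_seed assms by blast
  show "covers s (take (longest_covered_prefix s u) u)" by (rule lcp_props(2))
  fix t
  assume H: "left_seed s u \<and> (\<forall>t. left_seed t u \<longrightarrow> length s \<le> length t)"
    and ct: "covers t (take (longest_covered_prefix s u) u)"
  define j where "j = longest_covered_prefix s u"
  have jp: "per u \<le> j" using iff H j_def by simp
  have ju: "j \<le> length u" using lcp_props(1) j_def by simp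
  have j0: "0 < j" using jp per_props(1)[OF assms(1)] by simp
  then have "0 < length (take j u)" using ju assms(1) by simp
  then obtain i where oi: "occurs_at t (take j u) i" and "i \<le> 0" "0 < i + length t"
    using ct j_def unfolding covers_def by blast
  then have i0: "i = 0" and tne: "t \<noteq> []" by auto
  have tj: "length t \<le> j" and te: "\<And>x. x < length t \<Longrightarrow> u!x = t!x"
    using oi i0 ju by (auto simp: occ_nth)
  have pt: "prefix t u" unfolding prefix_def
  proof (intro exI[of _ "drop (length t) u"])
    have "take (length t) u = t" using tj ju te by (intro nth_equalityI) auto
    then show "u = t @ drop (length t) u" by (metis append_take_drop_id)
  qed
  have "j \<le> longest_covered_prefix t u" using lcp_props(3)[OF ju] ct j_def by simp
  then have "left_seed t u" using imp_seed[OF assms(1) tne pt] jp by simp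
  then show "length s \<le> length t" using H by blast
qed

end
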